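(* For every $h\in C_\mathbb{R}(\mathcal{X}^n)$ and every $\mu_1,\dots,\mu_n\in\mathrm{Prob}(\mathcal{X})$, $$P(h)\ge P_\mathrm{sym}(h:\mu_1,\dots,\mu_n)+\sum_{i=1}^nS(\mu_i),$$ and the following are equivalent: (i) $P(h)=P_\mathrm{sym}(h:\mu_1,\dots,\mu_n)+\sum_{i=1}^nS(\mu_i)$; (ii) $\mu_1,\dots,\mu_n$ are the marginals of the Gibbs measure $\mu_h(\mathbf{x})=Z_h^{-1}e^{h(\mathbf{x})}$, $\mathbf{x}\in\mathcal{X}^n$, $Z_h=\sum_{\mathbf{x}\in\mathcal{X}^n}e^{h(\mathbf{x})}$; (iii) for each $i$, $\mu_i$ is the Gibbs measure on $\mathcal{X}$ associated with $h_i(x)=\log\sum_{x_1,\dots,x_{i-1},x_{i+1},\dots,x_n\in\mathcal{X}}e^{h(x_1,\dots,x_{i-1},x,x_{i+1},\dots,x_n)}$.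
   Context: $\mathcal{X}=\{t_1,\dots,t_d\}$ is a finite set with a fixed order $t_1<\dots<t_d$; $n\in\mathbb{N}$. $\mathrm{Prob}(\mathcal{X}^k)$ is the set of probability measures on $\mathcal{X}^k$, $C_\mathbb{R}(\mathcal{X}^k)$ the real functions on $\mathcal{X}^k$ with max-norm. Shannon entropy: $S(\mu)=-\sum_t\mu(t)\log\mu(t)$. Pressure: $P(h)=\log\sum_{\mathbf{x}\in\mathcal{X}^k}e^{h(\mathbf{x})}$; the Gibbs measure associated with $h$ is $e^{h(\mathbf{x})-P(h)}$. For $\mathbf{x}=(x_1,\dots,x_N)\in\mathcal{X}^N$ its type is $\nu_\mathbf{x}(t)=\#\{j:x_j=t\}/N$. $\mathcal{X}_\le^N$ is the set of sequences in $\mathcal{X}^N$ of the form $(t_1,\dots,t_1,t_2,\dots,t_2,\dots,t_d,\dots,t_d)$ (nondecreasing). $S_N$ acts on $\mathcal{X}^N$ by $\sigma(\mathbf{x})=(x_{\sigma^{-1}(1)},\dots,x_{\sigma^{-1}(N)})$. An approximating sequence for $(\mu_1,\dots,\mu_n)$ is $\Xi(N)=(\xi_1(N),\dots,\xi_n(N))$ with $\xi_i(N)\in\mathcal{X}_\le^N$ and $\nu_{\xi_i(N)}(t)\to\mu_i(t)$ as $N\to\infty$ for all $t\in\mathcal{X}$, $1\le i\le n$. For $h\in C_\mathbb{R}(\mathcal{X}^n)$ and $\mathbf{x}_i=(x_{i1},\dots,x_{iN})\in\mathcal{X}^N$, $\kappa_N(h(\mathbf{x}_1,\dots,\mathbf{x}_n))=\frac1N\sum_{j=1}^Nh(x_{1j},\dots,x_{nj})$.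 The mutual pressure is $$P_\mathrm{sym}(h:\mu_1,\dots,\mu_n)=\limsup_{N\to\infty}\frac1N\log\Biggl[\frac1{(N!)^n}\sum_{\sigma_1,\dots,\sigma_n\in S_N}\exp\bigl(N\kappa_N(h(\sigma_1(\xi_1(N)),\dots,\sigma_n(\xi_n(N))))\bigr)\Biggr]$$ (independent of the approximating sequence). *)

theory Defs
  imports "HOL-Analysis.Analysis" "HOL-Combinatorics.Permutations"
begin

text \<open>The alphabet X is a finite linearly ordered type 'a. Points of X^k are
  modelled as extensional functions in PiE {0..<k} (%_. UNIV) (index i = coordinate i+1).\<close>

definition cube :: "nat \<Rightarrow> (nat \<Rightarrow> 'a) set" where
  "cube k = ({0..<k} \<rightarrow>\<^sub>E (UNIV :: 'a set))"

definition is_prob :: "('a::finite \<Rightarrow> real) \<Rightarrow> bool" where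
  "is_prob \<mu> \<longleftrightarrow> (\<forall>t. 0 \<le> \<mu> t) \<and> (\<Sum>t\<in>UNIV. \<mu> t) = 1"

definition entropy :: "('a::finite \<Rightarrow> real) \<Rightarrow> real" where
  "entropy \<mu> = - (\<Sum>t\<in>UNIV. (if \<mu> t = 0 then 0 else \<mu> t * ln (\<mu> t)))"

definition pressure :: "'b set \<Rightarrow> ('b \<Rightarrow> real) \<Rightarrow> real" where
  "pressure A f = ln (\<Sum>x\<in>A. exp (f x))"

definition gibbs :: "'b set \<Rightarrow> ('b \<Rightarrow> real) \<Rightarrow> 'b \<Rightarrow> real" where
  "gibbs A f x = exp (f x - pressure A f)"

definition gibbs_marginal :: "nat \<Rightarrow> ((nat \<Rightarrow> 'a::finite) \<Rightarrow> real) \<Rightarrow> nat \<Rightarrow> 'a \<Rightarrow> real" where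
  "gibbs_marginal n h i t = (\<Sum>x\<in>{x\<in>cube n. x i = t}. gibbs (cube n) h x)"

definition partial_log_sum :: "nat \<Rightarrow> ((nat \<Rightarrow> 'a::finite) \<Rightarrow> real) \<Rightarrow> nat \<Rightarrow> 'a \<Rightarrow> real" where
  "partial_log_sum n h i t = ln (\<Sum>x\<in>{x\<in>cube n. x i = t}. exp (h x))"

definition seq_type :: "'a list \<Rightarrow> 'a \<Rightarrow> real" where
  "seq_type xs t = real (count_list xs t) / real (length xs)"

definition sorted_seqs :: "nat \<Rightarrow> ('a::linorder) list set" where
  "sorted_seqs N = {xs. length xs = N \<and> sorted xs}"

definition approx_seq :: "nat \<Rightarrow> (nat \<Rightarrow> 'a::{finite,linorder} \<Rightarrow> real) \<Rightarrow> (nat \<Rightarrow> nat \<Rightarrow> 'a list) \<Rightarrow> bool" where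
  "approx_seq n \<mu> \<xi> \<longleftrightarrow>
     (\<forall>i<n. \<forall>N. \<xi> i N \<in> sorted_seqs N) \<and>
     (\<forall>i<n. \<forall>t. (\<lambda>N. seq_type (\<xi> i N) t) \<longlonglongrightarrow> \<mu> i t)"

definition perm_act :: "(nat \<Rightarrow> nat) \<Rightarrow> 'a list \<Rightarrow> 'a list" where
  "perm_act \<sigma> xs = map (\<lambda>j. xs ! inv \<sigma> j) [0..<length xs]"

text \<open>N * kappa_N(h(y_1,...,y_n)) for sequences y_i of length N.\<close>
definition kappa_sum :: "nat \<Rightarrow> nat \<Rightarrow> ((nat \<Rightarrow> 'a) \<Rightarrow> real) \<Rightarrow> (nat \<Rightarrow> 'a list) \<Rightarrow> real" where
  "kappa_sum n N h ys = (\<Sum>j<N. h (restrict (\<lambda>i. ys i ! j) {0..<n}))"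

definition perm_tuples :: "nat \<Rightarrow> nat \<Rightarrow> (nat \<Rightarrow> nat \<Rightarrow> nat) set" where
  "perm_tuples n N = ({0..<n} \<rightarrow>\<^sub>E {\<sigma>. \<sigma> permutes {0..<N}})"

definition mutual_pressure_term :: "nat \<Rightarrow> ((nat \<Rightarrow> 'a) \<Rightarrow> real) \<Rightarrow> (nat \<Rightarrow> nat \<Rightarrow> 'a list) \<Rightarrow> nat \<Rightarrow> real" where
  "mutual_pressure_term n h \<xi> N =
     (1 / real N) * ln ((1 / (fact N) ^ n) *
        (\<Sum>\<sigma>\<in>perm_tuples n N. exp (kappa_sum n N h (\<lambda>i. perm_act (\<sigma> i) (\<xi> i N)))))"

definition mutual_pressure :: "nat \<Rightarrow> ((nat \<Rightarrow> 'a) \<Rightarrow> real) \<Rightarrow> (nat \<Rightarrow> nat \<Rightarrow> 'a list) \<Rightarrow> ereal" where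
  "mutual_pressure n h \<xi> = limsup (\<lambda>N. ereal (mutual_pressure_term n h \<xi> N))"

end

theory Submission
  imports Defs "HOL-Combinatorics.Multiset_Permutations" "HOL-Real_Asymp.Real_Asymp"
begin


lemma ln_fact_lower: "real k * ln (real k) - real k \<le> ln (fact k)"
proof (induction k)
  case 0 then show ?case by simp
next
  case (Suc k)
  have key: "real k * ln (real k + 1) \<le> real k * ln (real k) + 1"
  proof (cases "k = 0")
    case False
    then have e: "1 + 1 / real k = (real k + 1) / real k" by (simp add: field_simps)
    have "ln (real k + 1) - ln (real k) = ln (1 + 1 / real k)"
      unfolding e using False by (simp add: ln_div)
    also have "\<dots> \<le> 1 / real k" by (rule ln_add_one_self_le_self) simp
    finally show ?thesis using False by (simp add: field_simps)
  qed simp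
  have "ln (fact (Suc k)) = ln (real k + 1) + ln (fact k)"
    by (simp add: ln_mult add.commute)
  then show ?case using Suc key by (simp add: algebra_simps)
qed

lemma ln_fact_upper: "ln (fact k) \<le> (real k + 1) * ln (real k + 1) - real k"
proof (induction k)
  case 0 then show ?case by simp
next
  case (Suc k)
  have key: "(real k + 2) * ln (real k + 1) + 1 \<le> (real k + 2) * ln (real k + 2)"
  proof -
    have "1 - 1 / ((real k + 2) / (real k + 1)) \<le> ln ((real k + 2) / (real k + 1))"
      using ln_le_minus_one[of "(real k + 1) / (real k + 2)"]
      by (simp add: ln_div field_simps)
    then have "1 / (real k + 2) \<le> ln (real k + 2) - ln (real k + 1)"
      by (simp add: ln_div field_simps)
    then show ?thesis by (simp add: field_simps)
  qed
  have "ln (fact (Suc k)) = ln (real k + 1) + ln (fact k)"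
    by (simp add: ln_mult add.commute)
  then show ?case using Suc key by (simp add: algebra_simps)
qed

lemma xlnx_step:
  assumes "k \<le> N"
  shows "(real k + 1) * ln (real k + 1) \<le> real k * ln (real k) + ln (real N + 1) + 1"
proof -
  have a: "real k * ln (real k + 1) \<le> real k * ln (real k) + 1"
  proof (cases "k = 0")
    case False
    then have e: "1 + 1 / real k = (real k + 1) / real k" by (simp add: field_simps)
    have "ln (real k + 1) - ln (real k) = ln (1 + 1 / real k)"
      unfolding e using False by (simp add: ln_div)
    also have "\<dots> \<le> 1 / real k" by (rule ln_add_one_self_le_self) simp
    finally show ?thesis using False by (simp add: field_simps)
  qed simp
  have b: "ln (real k + 1) \<le> ln (real N + 1)" using assms by simp
  have c: "(real k + 1) * ln (real k + 1) = real k * ln (real k + 1) + ln (real k + 1)"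
    by (simp add: distrib_right)
  show ?thesis using a b c by linarith
qed


definition Hent :: "'b set \<Rightarrow> ('b \<Rightarrow> real) \<Rightarrow> real" where
  "Hent T p = - (\<Sum>t\<in>T. p t * ln (p t))"

lemma N_Hent:
  assumes "finite T" "(\<Sum>t\<in>T. c t) = N" "N > 0"
  shows "real N * Hent T (\<lambda>t. real (c t) / real N) = real N * ln (real N) - (\<Sum>t\<in>T. real (c t) * ln (real (c t)))"
proof -
  have "real N * (real (c t) / real N * ln (real (c t) / real N)) = real (c t) * ln (real (c t)) - real (c t) * ln (real N)" for t
    using assms(3) by (cases "c t = 0") (simp_all add: ln_div algebra_simps)
  then have "real N * Hent T (\<lambda>t. real (c t) / real N) = - (\<Sum>t\<in>T. real (c t) * ln (real (c t)) - real (c t) * ln (real N))"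
    unfolding Hent_def by (simp add: sum_distrib_left)
  also have "\<dots> = real N * ln (real N) - (\<Sum>t\<in>T. real (c t) * ln (real (c t)))"
    by (simp add: sum_subtractf sum_distrib_right[symmetric] assms(2)[symmetric])
  finally show ?thesis .
qed

lemma multi_lower:
  assumes "finite T" "(\<Sum>t\<in>T. c t) = N" "N > 0"
  shows "real N * Hent T (\<lambda>t. real (c t) / real N) - real (card T) * (ln (real N + 1) + 1)
         \<le> ln (fact N) - (\<Sum>t\<in>T. ln (fact (c t)))"
proof -
  have le: "c t \<le> N" if "t \<in> T" for t using member_le_sum[of t T c] assms that by simp
  have "ln (fact (c t)) \<le> real (c t) * ln (real (c t)) + (ln (real N + 1) + 1) - real (c t)" if "t \<in> T" for t
    using ln_fact_upper[of "c t"] xlnx_step[OF le[OF that]] by linarith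
  then have "(\<Sum>t\<in>T. ln (fact (c t))) \<le> (\<Sum>t\<in>T. real (c t) * ln (real (c t)) + (ln (real N + 1) + 1) - real (c t))"
    by (rule sum_mono)
  also have "\<dots> = (\<Sum>t\<in>T. real (c t) * ln (real (c t))) + real (card T) * (ln (real N + 1) + 1) - real N"
    by (simp add: sum.distrib sum_subtractf assms(2)[symmetric])
  finally have s: "(\<Sum>t\<in>T. ln (fact (c t))) \<le> \<dots>" .
  show ?thesis using s ln_fact_lower[of N] N_Hent[OF assms] by linarith
qed

lemma multi_upper:
  assumes "finite T" "(\<Sum>t\<in>T. c t) = N" "N > 0"
  shows "ln (fact N) - (\<Sum>t\<in>T. ln (fact (c t)))
         \<le> real N * Hent T (\<lambda>t. real (c t) / real N) + ln (real N + 1) + 1"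
proof -
  have "(\<Sum>t\<in>T. real (c t) * ln (real (c t)) - real (c t)) \<le> (\<Sum>t\<in>T. ln (fact (c t)))"
    by (rule sum_mono) (rule ln_fact_lower)
  then have s: "(\<Sum>t\<in>T. real (c t) * ln (real (c t))) - real N \<le> (\<Sum>t\<in>T. ln (fact (c t)))"
    by (simp add: sum_subtractf assms(2)[symmetric])
  show ?thesis using s ln_fact_upper[of N] xlnx_step[of N N] N_Hent[OF assms] by linarith
qed



lemma perm_act_eq: "perm_act \<sigma> xs = permute_list (inv \<sigma>) xs"
  by (simp add: perm_act_def permute_list_def)

lemma perm_act_image:
  assumes "length xs = N"
  shows "(\<lambda>\<sigma>. perm_act \<sigma> xs) ` {\<sigma>. \<sigma> permutes {0..<N}} = permutations_of_multiset (mset xs)"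
proof
  show "(\<lambda>\<sigma>. perm_act \<sigma> xs) ` {\<sigma>. \<sigma> permutes {0..<N}} \<subseteq> permutations_of_multiset (mset xs)"
    using assms by (auto simp: perm_act_eq permutations_of_multiset_def atLeast0LessThan
        intro!: mset_permute_list permutes_inv)
next
  show "permutations_of_multiset (mset xs) \<subseteq> (\<lambda>\<sigma>. perm_act \<sigma> xs) ` {\<sigma>. \<sigma> permutes {0..<N}}"
  proof
    fix ys assume "ys \<in> permutations_of_multiset (mset xs)"
    then have "mset ys = mset xs" by (simp add: permutations_of_multiset_def)
    then obtain p where p: "p permutes {..<length xs}" "permute_list p xs = ys"
      by (rule mset_eq_permutation)
    have "inv p permutes {0..<N}" using p(1) assms by (simp add: atLeast0LessThan permutes_inv)
    moreover have "perm_act (inv p) xs = ys"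
      using p by (simp add: perm_act_eq inv_inv_eq permutes_bij)
    ultimately show "ys \<in> (\<lambda>\<sigma>. perm_act \<sigma> xs) ` {\<sigma>. \<sigma> permutes {0..<N}}" by blast
  qed
qed

lemma perm_act_fiber_card:
  assumes "length xs = N" "ys \<in> permutations_of_multiset (mset xs)"
  shows "card {\<sigma>\<in>{\<sigma>. \<sigma> permutes {0..<N}}. perm_act \<sigma> xs = ys}
       = card {\<sigma>\<in>{\<sigma>. \<sigma> permutes {0..<N}}. perm_act \<sigma> xs = xs}"
proof -
  define P where "P = {\<sigma>. \<sigma> permutes {..<N}}"
  from assms(2) have "mset ys = mset xs" by (simp add: permutations_of_multiset_def)
  then obtain \<rho> where r: "\<rho> permutes {..<length xs}" "permute_list \<rho> xs = ys"
    by (rule mset_eq_permutation)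
  have rN: "\<rho> permutes {..<N}" using r assms by simp
  have rinv: "inv \<rho> permutes {..<N}" using rN by (rule permutes_inv)
  have bij: "bij_betw (\<lambda>\<sigma>. inv \<rho> \<circ> \<sigma>) {\<sigma>\<in>P. permute_list (inv \<sigma>) xs = xs} {\<sigma>\<in>P. permute_list (inv \<sigma>) xs = ys}"
  proof (rule bij_betw_byWitness[where f' = "\<lambda>\<sigma>. \<rho> \<circ> \<sigma>"])
    show "\<forall>a\<in>{\<sigma> \<in> P. permute_list (inv \<sigma>) xs = xs}. \<rho> \<circ> (inv \<rho> \<circ> a) = a"
      using rN by (auto simp: o_assoc[symmetric] permutes_inverses(1) fun_eq_iff)
    show "\<forall>a'\<in>{\<sigma> \<in> P. permute_list (inv \<sigma>) xs = ys}. inv \<rho> \<circ> (\<rho> \<circ> a') = a'"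
      using rN by (auto simp: fun_eq_iff permutes_inverses(2))
    show "(\<lambda>\<sigma>. inv \<rho> \<circ> \<sigma>) ` {\<sigma> \<in> P. permute_list (inv \<sigma>) xs = xs} \<subseteq> {\<sigma> \<in> P. permute_list (inv \<sigma>) xs = ys}"
    proof (rule image_subsetI)
      fix \<sigma> assume "\<sigma> \<in> {\<sigma> \<in> P. permute_list (inv \<sigma>) xs = xs}"
      then have s: "\<sigma> \<in> P" "permute_list (inv \<sigma>) xs = xs" by simp_all
      have A: "inv \<rho> \<circ> \<sigma> \<in> P" using s rinv by (simp add: P_def permutes_compose)
      have "inv (inv \<rho> \<circ> \<sigma>) = inv \<sigma> \<circ> \<rho>"
        using s rN rinv by (simp add: P_def o_inv_distrib permutes_bij inv_inv_eq)
      then show "inv \<rho> \<circ> \<sigma> \<in> {\<sigma> \<in> P. permute_list (inv \<sigma>) xs = ys}"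
        using s r A rN assms(1) by (simp add: permute_list_compose)
    qed
    show "(\<lambda>\<sigma>. \<rho> \<circ> \<sigma>) ` {\<sigma> \<in> P. permute_list (inv \<sigma>) xs = ys} \<subseteq> {\<sigma> \<in> P. permute_list (inv \<sigma>) xs = xs}"
    proof (rule image_subsetI)
      fix \<sigma> assume "\<sigma> \<in> {\<sigma> \<in> P. permute_list (inv \<sigma>) xs = ys}"
      then have s: "\<sigma> \<in> P" "permute_list (inv \<sigma>) xs = ys" by simp_all
      have A: "\<rho> \<circ> \<sigma> \<in> P" using s rN by (simp add: P_def permutes_compose)
      have "inv (\<rho> \<circ> \<sigma>) = inv \<sigma> \<circ> inv \<rho>"
        using s rN by (simp add: P_def o_inv_distrib permutes_bij)
      moreover have "permute_list (inv \<rho>) ys = xs"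
      proof -
        have "permute_list (\<rho> \<circ> inv \<rho>) xs = permute_list (inv \<rho>) (permute_list \<rho> xs)"
          using rinv assms(1) by (intro permute_list_compose) simp
        moreover have "\<rho> \<circ> inv \<rho> = id" using rN by (simp add: permutes_inv_o(1))
        ultimately show ?thesis using r by simp
      qed
      ultimately show "\<rho> \<circ> \<sigma> \<in> {\<sigma> \<in> P. permute_list (inv \<sigma>) xs = xs}"
        using s r rinv A assms(1) by (simp add: permute_list_compose)
    qed
  qed
  show ?thesis using bij_betw_same_card[OF bij]
    by (simp add: P_def perm_act_eq atLeast0LessThan)
qed


lemma perm_act_fiber_real:
  assumes "length xs = N" "ys \<in> permutations_of_multiset (mset xs)"
  shows "real (card {\<sigma>\<in>{\<sigma>. \<sigma> permutes {0..<N}}. perm_act \<sigma> xs = ys})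
       = fact N / real (card (permutations_of_multiset (mset xs)))"
proof -
  define P where "P = {\<sigma>. \<sigma> permutes {0..<N}}"
  define A where "A = permutations_of_multiset (mset xs)"
  define c0 where "c0 = card {\<sigma>\<in>P. perm_act \<sigma> xs = xs}"
  have finP: "finite P" unfolding P_def by (rule finite_permutations) simp
  have cP: "card P = fact N" unfolding P_def by (rule card_permutations) simp_all
  have "card P = (\<Sum>x\<in>P. 1::nat)" by simp
  also have "\<dots> = (\<Sum>y\<in>(\<lambda>\<sigma>. perm_act \<sigma> xs) ` P. \<Sum>x\<in>{x\<in>P. perm_act x xs = y}. 1)"
    by (rule sum.image_gen[OF finP])
  also have "\<dots> = (\<Sum>y\<in>A. c0)"
    unfolding P_def A_def c0_def perm_act_image[OF assms(1)]
    using perm_act_fiber_card[OF assms(1)] by (intro sum.cong refl) simp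
  also have "\<dots> = card A * c0" by simp
  finally have e: "card A * c0 = fact N" using cP by simp
  have "card A > 0" unfolding A_def by (simp add: card_gt_0_iff)
  moreover have "card {\<sigma>\<in>P. perm_act \<sigma> xs = ys} = c0"
    unfolding P_def c0_def using perm_act_fiber_card[OF assms] by simp
  ultimately show ?thesis using e unfolding P_def A_def
    by (simp add: field_simps) (metis of_nat_fact of_nat_mult)
qed

lemma sum_PiE_fibers:
  fixes F :: "(nat \<Rightarrow> 'b) \<Rightarrow> real"
  assumes finI: "finite I" and finS: "\<And>i. i \<in> I \<Longrightarrow> finite (S i)"
    and img: "\<And>i. i \<in> I \<Longrightarrow> g i ` S i = B i"
    and fib: "\<And>i y. i \<in> I \<Longrightarrow> y \<in> B i \<Longrightarrow> real (card {s\<in>S i. g i s = y}) = c i"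
    and Fcong: "\<And>y y'. (\<And>i. i \<in> I \<Longrightarrow> y i = y' i) \<Longrightarrow> F y = F y'"
  shows "(\<Sum>\<sigma>\<in>PiE I S. F (\<lambda>i. g i (\<sigma> i))) = (\<Prod>i\<in>I. c i) * (\<Sum>y\<in>PiE I B. F y)"
proof -
  define G where "G = (\<lambda>\<sigma>. restrict (\<lambda>i. g i (\<sigma> i)) I)"
  have fin: "finite (PiE I S)" using finI finS by (simp add: finite_PiE)
  have "(\<Sum>\<sigma>\<in>PiE I S. F (\<lambda>i. g i (\<sigma> i))) = (\<Sum>\<sigma>\<in>PiE I S. F (G \<sigma>))"
    by (intro sum.cong refl Fcong) (simp add: G_def)
  also have "\<dots> = (\<Sum>y\<in>G ` PiE I S. \<Sum>\<sigma>\<in>{\<sigma>\<in>PiE I S. G \<sigma> = y}. F (G \<sigma>))"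
    by (rule sum.image_gen[OF fin])
  also have "G ` PiE I S = PiE I B"
  proof
    show "G ` PiE I S \<subseteq> PiE I B" using img by (force simp: G_def PiE_iff)
    show "PiE I B \<subseteq> G ` PiE I S"
    proof
      fix y assume y: "y \<in> PiE I B"
      define \<sigma> where "\<sigma> = restrict (\<lambda>i. SOME s. s \<in> S i \<and> g i s = y i) I"
      have ex: "\<exists>s. s \<in> S i \<and> g i s = y i" if "i \<in> I" for i
        using y img[OF that] that by (force simp: PiE_iff)
      have "\<sigma> \<in> PiE I S" using someI_ex[OF ex] by (auto simp: \<sigma>_def)
      moreover have "G \<sigma> = y" using someI_ex[OF ex] y
        by (auto simp: G_def \<sigma>_def fun_eq_iff PiE_iff extensional_def)
      ultimately show "y \<in> G ` PiE I S" by blast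
    qed
  qed
  also have "(\<Sum>y\<in>PiE I B. \<Sum>\<sigma>\<in>{\<sigma>\<in>PiE I S. G \<sigma> = y}. F (G \<sigma>)) = (\<Sum>y\<in>PiE I B. (\<Prod>i\<in>I. c i) * F y)"
  proof (intro sum.cong refl)
    fix y assume y: "y \<in> PiE I B"
    have set: "{\<sigma>\<in>PiE I S. G \<sigma> = y} = PiE I (\<lambda>i. {s\<in>S i. g i s = y i})"
      using y by (auto simp: G_def PiE_iff fun_eq_iff extensional_def)
    have "(\<Sum>\<sigma>\<in>{\<sigma>\<in>PiE I S. G \<sigma> = y}. F (G \<sigma>)) = (\<Sum>\<sigma>\<in>{\<sigma>\<in>PiE I S. G \<sigma> = y}. F y)"
      by (intro sum.cong) auto
    also have "\<dots> = real (card (PiE I (\<lambda>i. {s\<in>S i. g i s = y i}))) * F y" by (simp add: set)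
    also have "\<dots> = (\<Prod>i\<in>I. c i) * F y"
      using y finI by (simp add: card_PiE fib PiE_iff)
    finally show "(\<Sum>\<sigma>\<in>{\<sigma>\<in>PiE I S. G \<sigma> = y}. F (G \<sigma>)) = (\<Prod>i\<in>I. c i) * F y" .
  qed
  finally show ?thesis by (simp add: sum_distrib_left)
qed



definition colf :: "nat \<Rightarrow> (nat \<Rightarrow> 'a list) \<Rightarrow> nat \<Rightarrow> (nat \<Rightarrow> 'a)" where
  "colf n ys j = restrict (\<lambda>i. ys i ! j) {0..<n}"

lemma kappa_colf: "kappa_sum n N h ys = (\<Sum>j<N. h (colf n ys j))"
  by (simp add: kappa_sum_def colf_def)

lemma count_nth_sum:
  assumes "length l = N"
  shows "(\<Sum>j<N. if l ! j = t then 1 else 0 :: real) = real (count_list l t)"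
proof -
  have "(\<Sum>j<N. if l ! j = t then 1 else 0 :: real) = real (card {j. j < N \<and> l ! j = t})"
    by (simp add: sum.If_cases Int_def)
  also have "card {j. j < N \<and> l ! j = t} = count_list l t"
    using assms by (simp add: count_list_eq_length_filter length_filter_conv_card eq_commute)
  finally show ?thesis .
qed

lemma cube_finite: "finite (cube n :: (nat \<Rightarrow> 'a::finite) set)"
  by (simp add: cube_def finite_PiE)

lemma W_upper:
  fixes h :: "(nat \<Rightarrow> 'a::finite) \<Rightarrow> real" and xs :: "nat \<Rightarrow> 'a list"
  assumes len: "\<And>i. i < n \<Longrightarrow> length (xs i) = N"
    and ie: "i0 < n \<or> \<epsilon> = 0"
  shows "(\<Sum>ys\<in>PiE {0..<n} (\<lambda>i. permutations_of_multiset (mset (xs i))). exp (kappa_sum n N h ys))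
       \<le> exp (real N * pressure (cube n) (\<lambda>x. h x + \<epsilon> * (if x i0 = t0 then 1 else 0))
              - \<epsilon> * real (count_list (xs i0) t0))"
proof -
  define he where "he = (\<lambda>x. h x + \<epsilon> * (if x i0 = t0 then 1 else 0))"
  define D where "D = PiE {0..<n} (\<lambda>i. permutations_of_multiset (mset (xs i)))"
  define k where "k = real (count_list (xs i0) t0)"
  have lenD: "length (ys i) = N" if "ys \<in> D" "i < n" for ys i
  proof -
    have "ys i \<in> permutations_of_multiset (mset (xs i))" using that by (auto simp: D_def PiE_iff)
    then show ?thesis using len[OF that(2)] length_finite_permutations_of_multiset by fastforce
  qed
  have shift: "kappa_sum n N he ys = kappa_sum n N h ys + \<epsilon> * k" if ys: "ys \<in> D" for ys
  proof (cases "\<epsilon> = 0")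
    case True then show ?thesis by (simp add: he_def kappa_sum_def)
  next
    case False
    then have i0: "i0 < n" using ie by simp
    have "kappa_sum n N he ys = kappa_sum n N h ys + \<epsilon> * (\<Sum>j<N. if ys i0 ! j = t0 then 1 else 0)"
      using i0 by (auto simp add: kappa_colf he_def sum.distrib[symmetric] sum_distrib_left colf_def intro!: sum.cong)
    also have "(\<Sum>j<N. if ys i0 ! j = t0 then 1 else 0) = real (count_list (ys i0) t0)"
      by (rule count_nth_sum[OF lenD[OF ys i0]])
    also have "count_list (ys i0) t0 = count_list (xs i0) t0"
      using ys i0 by (auto simp: D_def PiE_iff permutations_of_multiset_def count_mset[symmetric])
    finally show ?thesis by (simp add: k_def)
  qed
  define \<Phi> where "\<Phi> = (\<lambda>ys::nat \<Rightarrow> 'a list. restrict (colf n ys) {0..<N})"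
  have inj: "inj_on \<Phi> D"
  proof (rule inj_onI)
    fix ys ys' assume y: "ys \<in> D" "ys' \<in> D" "\<Phi> ys = \<Phi> ys'"
    show "ys = ys'"
    proof
      fix i show "ys i = ys' i"
      proof (cases "i < n")
        case True
        show ?thesis
        proof (rule nth_equalityI)
          show "length (ys i) = length (ys' i)" using lenD y True by simp
          fix j assume "j < length (ys i)"
          then have "j < N" using lenD y True by simp
          then have "colf n ys j i = colf n ys' j i" using y(3) unfolding \<Phi>_def
            by (metis atLeastLessThan_iff restrict_apply' zero_le)
          then show "ys i ! j = ys' i ! j" using True by (simp add: colf_def)
        qed
      next
        case False then show ?thesis using y(1,2) by (auto simp: D_def PiE_iff extensional_def)
      qed
    qed
  qed
  have sub: "\<Phi> ` D \<subseteq> PiE {0..<N} (\<lambda>_. cube n)"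
    by (auto simp: \<Phi>_def colf_def cube_def)
  have "(\<Sum>ys\<in>D. exp (kappa_sum n N h ys)) = (\<Sum>ys\<in>D. exp (kappa_sum n N he ys) * exp (- \<epsilon> * k))"
    by (intro sum.cong refl) (simp add: shift exp_add[symmetric])
  also have "\<dots> = (\<Sum>ys\<in>D. (\<Prod>j\<in>{0..<N}. exp (he (\<Phi> ys j)))) * exp (- \<epsilon> * k)"
    by (simp add: sum_distrib_right kappa_colf exp_sum \<Phi>_def atLeast0LessThan)
  also have "(\<Sum>ys\<in>D. (\<Prod>j\<in>{0..<N}. exp (he (\<Phi> ys j)))) = (\<Sum>z\<in>\<Phi> ` D. (\<Prod>j\<in>{0..<N}. exp (he (z j))))"
    by (rule sum.reindex[OF inj, symmetric, unfolded o_def])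
  also have "\<dots> \<le> (\<Sum>z\<in>PiE {0..<N} (\<lambda>_. cube n). (\<Prod>j\<in>{0..<N}. exp (he (z j))))"
    by (rule sum_mono2[OF _ sub]) (auto simp: finite_PiE cube_finite intro: prod_nonneg)
  also have "\<dots> = (\<Prod>j\<in>{0..<N}. \<Sum>x\<in>cube n. exp (he x))"
    by (rule prod_sum_PiE[symmetric]) (simp_all add: cube_finite)
  also have "\<dots> = exp (real N * pressure (cube n) he)"
  proof -
    have pos: "(\<Sum>x\<in>cube n. exp (he x)) > 0"
      by (rule sum_pos) (auto simp: cube_finite[unfolded cube_def] cube_def PiE_eq_empty_iff)
    show ?thesis using pos by (simp add: pressure_def exp_of_nat_mult)
  qed
  finally have "(\<Sum>ys\<in>D. exp (kappa_sum n N h ys)) \<le> exp (real N * pressure (cube n) he) * exp (- \<epsilon> * k)"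
    by (simp add: mult_right_mono)
  then show ?thesis by (simp add: D_def he_def k_def exp_diff exp_minus field_simps)
qed


lemma Msum_count: "finite C \<Longrightarrow> count (\<Sum>x\<in>C. replicate_mset (m x) x) y = (if y \<in> C then m y else 0)"
  by (induction C rule: finite_induct) auto

lemma Msum_image: "finite C \<Longrightarrow> image_mset f (\<Sum>x\<in>C. replicate_mset (m x) x) = (\<Sum>x\<in>C. replicate_mset (m x) (f x))"
  by (induction C rule: finite_induct) auto

lemma Msum_size: "finite C \<Longrightarrow> size (\<Sum>x\<in>C. replicate_mset (m x) x) = (\<Sum>x\<in>C. m x)"
  by (induction C rule: finite_induct) auto

lemma Msum_summ: "finite C \<Longrightarrow> sum_mset (image_mset (h::'b \<Rightarrow> real) (\<Sum>x\<in>C. replicate_mset (m x) x)) = (\<Sum>x\<in>C. real (m x) * h x)"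
  by (induction C rule: finite_induct) auto

lemma Msum_set: "finite C \<Longrightarrow> set_mset (\<Sum>x\<in>C. replicate_mset (m x) x) \<subseteq> C"
  by (induction C rule: finite_induct) auto

lemma W_lower:
  fixes h :: "(nat \<Rightarrow> 'a::finite) \<Rightarrow> real" and xs :: "nat \<Rightarrow> 'a list" and m :: "(nat \<Rightarrow> 'a) \<Rightarrow> nat"
  assumes len: "\<And>i. i < n \<Longrightarrow> length (xs i) = N"
    and sumN: "(\<Sum>x\<in>cube n. m x) = N"
    and marg: "\<And>i t. i < n \<Longrightarrow> (\<Sum>x\<in>{x\<in>cube n. x i = t}. m x) = count_list (xs i) t"
  shows "ln (fact N) - (\<Sum>x\<in>cube n. ln (fact (m x))) + (\<Sum>x\<in>cube n. real (m x) * h x)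
       \<le> ln (\<Sum>ys\<in>PiE {0..<n} (\<lambda>i. permutations_of_multiset (mset (xs i))). exp (kappa_sum n N h ys))"
proof -
  define C where "C = (cube n :: (nat \<Rightarrow> 'a) set)"
  have finC: "finite C" by (simp add: C_def cube_finite)
  define M where "M = (\<Sum>x\<in>C. replicate_mset (m x) x)"
  define D where "D = PiE {0..<n} (\<lambda>i. permutations_of_multiset (mset (xs i)))"
  define E where "E = (\<Sum>x\<in>C. real (m x) * h x)"
  define \<Psi> where "\<Psi> = (\<lambda>z::(nat \<Rightarrow> 'a) list. restrict (\<lambda>i. map (\<lambda>c. c i) z) {0..<n})"
  define P where "P = permutations_of_multiset M"
  have sizeM: "size M = N" using sumN by (simp add: M_def Msum_size finC C_def)
  have setM: "set_mset M \<subseteq> C" by (simp add: M_def Msum_set finC)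
  have cntM: "count M y = (if y \<in> C then m y else 0)" for y by (simp add: M_def Msum_count finC)
  have inM: "y \<in># M \<longleftrightarrow> y \<in> C \<and> m y > 0" for y
    by (simp add: count_greater_zero_iff[symmetric] cntM del: count_greater_zero_iff)
  have zP: "mset z = M" "length z = N" "set z \<subseteq> C" if "z \<in> P" for z
    using that sizeM setM by (auto simp: P_def permutations_of_multiset_def)
  have psiD: "\<Psi> z \<in> D" if z: "z \<in> P" for z
  proof -
    have "mset (map (\<lambda>c. c i) z) = mset (xs i)" if i: "i < n" for i
    proof (rule multiset_eqI)
      fix t
      have "count (mset (map (\<lambda>c. c i) z)) t = count (image_mset (\<lambda>c. c i) M) t"
        using zP[OF z] by simp
      also have "\<dots> = (\<Sum>y\<in>(\<lambda>c. c i) -` {t} \<inter> set_mset M. count M y)"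
        by (rule count_image_mset)
      also have "\<dots> = (\<Sum>y\<in>{x\<in>C. x i = t}. count M y)"
        by (rule sum.mono_neutral_left) (use setM finC in \<open>auto simp: cntM inM\<close>)
      also have "\<dots> = (\<Sum>y\<in>{x\<in>C. x i = t}. m y)" by (intro sum.cong) (auto simp: cntM)
      also have "\<dots> = count (mset (xs i)) t" using marg[OF i] by (simp add: C_def count_mset)
      finally show "count (mset (map (\<lambda>c. c i) z)) t = count (mset (xs i)) t" .
    qed
    then show ?thesis by (auto simp: \<Psi>_def D_def permutations_of_multiset_def)
  qed
  have colz: "colf n (\<Psi> z) j = z ! j" if z: "z \<in> P" and j: "j < N" for z j
  proof -
    have "z ! j \<in> C" using zP[OF z] j by (auto simp: set_conv_nth)
    then have ext: "z ! j \<in> extensional {0..<n}" by (simp add: C_def cube_def PiE_iff)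
    show ?thesis
    proof
      fix i show "colf n (\<Psi> z) j i = (z ! j) i"
        using ext j zP[OF z] by (cases "i < n") (auto simp: colf_def \<Psi>_def extensional_def)
    qed
  qed
  have kap: "kappa_sum n N h (\<Psi> z) = E" if z: "z \<in> P" for z
  proof -
    have "kappa_sum n N h (\<Psi> z) = (\<Sum>j<N. h (z ! j))" using colz[OF z] by (simp add: kappa_colf)
    also have "\<dots> = sum_list (map h z)"
      using zP[OF z] by (simp add: sum_list_sum_nth atLeast0LessThan)
    also have "\<dots> = sum_mset (image_mset h M)"
      using zP[OF z] by (metis mset_map sum_mset_sum_list)
    also have "\<dots> = E" by (simp add: M_def E_def Msum_summ finC)
    finally show ?thesis .
  qed
  have inj: "inj_on \<Psi> P"
  proof (rule inj_onI)
    fix z z' assume zz: "z \<in> P" "z' \<in> P" "\<Psi> z = \<Psi> z'"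
    show "z = z'"
    proof (rule nth_equalityI)
      show "length z = length z'" using zP zz by simp
      fix j assume "j < length z"
      then have j: "j < N" using zP zz by simp
      show "z ! j = z' ! j" using colz[OF zz(1) j] colz[OF zz(2) j] zz(3) by simp
    qed
  qed
  have finD: "finite D" by (simp add: D_def finite_PiE)
  have "real (card P) * exp E = (\<Sum>z\<in>P. exp (kappa_sum n N h (\<Psi> z)))" by (simp add: kap)
  also have "\<dots> = (\<Sum>ys\<in>\<Psi> ` P. exp (kappa_sum n N h ys))"
    by (rule sum.reindex[OF inj, symmetric, unfolded o_def])
  also have "\<dots> \<le> (\<Sum>ys\<in>D. exp (kappa_sum n N h ys))"
    by (rule sum_mono2[OF finD]) (use psiD in auto)
  finally have le: "real (card P) * exp E \<le> (\<Sum>ys\<in>D. exp (kappa_sum n N h ys))" .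
  have cardP: "real (card P) * (\<Prod>x\<in>C. fact (m x)) = fact N"
  proof -
    have "(\<Prod>x\<in>set_mset M. fact (count M x)) = (\<Prod>x\<in>C. fact (count M x) :: nat)"
    proof (rule prod.mono_neutral_left[OF finC setM], rule ballI)
      fix i assume "i \<in> C - set_mset M"
      then have "count M i = 0" by (simp add: count_eq_zero_iff)
      then show "fact (count M i) = 1" by simp
    qed
    also have "\<dots> = (\<Prod>x\<in>C. fact (m x))" by (intro prod.cong) (auto simp: cntM)
    finally have "card P * (\<Prod>x\<in>C. fact (m x)) = fact N"
      using card_permutations_of_multiset_aux[of M] sizeM by (simp add: P_def)
    then have "real (card P * (\<Prod>x\<in>C. fact (m x))) = fact N" by (metis of_nat_fact)
    then show ?thesis by simp
  qed
  have cpos: "card P > 0" by (simp add: P_def card_gt_0_iff)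
  have prpos: "(\<Prod>x\<in>C. fact (m x) :: real) > 0" by (rule prod_pos) simp
  have "ln (real (card P)) = ln (fact N) - (\<Sum>x\<in>C. ln (fact (m x)))"
  proof -
    have "ln (fact N :: real) = ln (real (card P)) + ln (\<Prod>x\<in>C. fact (m x) :: real)"
      using ln_mult[of "real (card P)" "\<Prod>x\<in>C. fact (m x) :: real"] cardP cpos prpos by simp
    moreover have "ln (\<Prod>x\<in>C. fact (m x) :: real) = (\<Sum>x\<in>C. ln (fact (m x)))"
      using finC by (intro ln_prod) auto
    ultimately show ?thesis by simp
  qed
  moreover have "ln (real (card P) * exp E) \<le> ln (\<Sum>ys\<in>D. exp (kappa_sum n N h ys))"
    using le cpos by (subst ln_le_cancel_iff) (auto intro: less_le_trans[OF _ le])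
  ultimately show ?thesis using cpos by (simp add: ln_mult C_def E_def D_def)
qed



lemma entropy_Hent: "entropy \<mu> = Hent UNIV \<mu>"
  unfolding entropy_def Hent_def by (rule arg_cong[where f=uminus], rule sum.cong) simp_all

lemma xlnx_cont: "continuous_on {0..} (\<lambda>x::real. x * ln x)"
proof (rule continuous_on_eq_continuous_within[THEN iffD2], rule ballI)
  fix x :: real assume x: "x \<in> {0..}"
  show "continuous (at x within {0..}) (\<lambda>x. x * ln x)"
  proof (cases "x = 0")
    case True
    have "((\<lambda>x::real. x * ln x) \<longlongrightarrow> 0) (at_right 0)" by real_asymp
    then have "((\<lambda>x::real. x * ln x) \<longlongrightarrow> 0 * ln 0) (at 0 within {0..})"
      by (simp add: at_within_Ici_at_right)
    then show ?thesis using True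
      by (simp only: continuous_within)
  next
    case False
    then have "x > 0" using x by simp
    then have "isCont (\<lambda>x. x * ln x) x" by (intro isCont_mult isCont_ln) auto
    then show ?thesis by (rule continuous_at_imp_continuous_at_within)
  qed
qed

lemma xlnx_tendsto:
  assumes "(f \<longlongrightarrow> a) F" "\<forall>\<^sub>F x in F. f x \<ge> (0::real)"
  shows "((\<lambda>x. f x * ln (f x)) \<longlongrightarrow> a * ln a) F"
proof (cases "F = bot")
  case True then show ?thesis by simp
next
  case False
  have a: "a \<ge> 0" using tendsto_lowerbound[OF assms(1) assms(2) False] .
  show ?thesis
    using continuous_on_tendsto_compose[OF xlnx_cont assms(1)] a assms(2) by (simp add: o_def)
qed

lemma Hent_tendsto:
  assumes "finite T" "\<And>t. t \<in> T \<Longrightarrow> ((\<lambda>N. p N t) \<longlongrightarrow> q t) F"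
    "\<And>t. t \<in> T \<Longrightarrow> \<forall>\<^sub>F N in F. p N t \<ge> 0"
  shows "((\<lambda>N. Hent T (p N)) \<longlongrightarrow> Hent T q) F"
  unfolding Hent_def by (intro tendsto_minus tendsto_sum xlnx_tendsto assms)

lemma floor_div_tendsto: "(\<lambda>N. real_of_int \<lfloor>real N * a\<rfloor> / real N) \<longlonglongrightarrow> a"
proof (rule tendsto_sandwich[where f = "\<lambda>N. a - 1 / real N" and h = "\<lambda>N. a"])
  show "\<forall>\<^sub>F N in sequentially. a - 1 / real N \<le> real_of_int \<lfloor>real N * a\<rfloor> / real N"
    using eventually_gt_at_top[of 0]
  proof eventually_elim
    case (elim N)
    have "real N * a - 1 \<le> real_of_int \<lfloor>real N * a\<rfloor>" by linarith
    then have "(real N * a - 1) / real N \<le> real_of_int \<lfloor>real N * a\<rfloor> / real N"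
      using elim by (intro divide_right_mono) auto
    moreover have "(real N * a - 1) / real N = a - 1 / real N" using elim by (simp add: field_simps)
    ultimately show ?case by simp
  qed
  show "\<forall>\<^sub>F N in sequentially. real_of_int \<lfloor>real N * a\<rfloor> / real N \<le> a"
    using eventually_gt_at_top[of 0]
  proof eventually_elim
    case (elim N)
    have "real_of_int \<lfloor>real N * a\<rfloor> \<le> real N * a" by linarith
    then show ?case using elim by (simp add: field_simps)
  qed
  show "(\<lambda>N. a - 1 / real N) \<longlonglongrightarrow> a" by real_asymp
qed (rule tendsto_const)

lemma log_over_N: "(\<lambda>N::nat. (ln (real N + 1) + 1) / real N) \<longlonglongrightarrow> 0"
  by real_asymp



lemma cube_param_sum:
  fixes G :: "(nat \<Rightarrow> 'a::finite) \<Rightarrow> 'b::comm_monoid_add"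
  assumes i: "i < n"
  shows "(\<Sum>x\<in>cube n. if (\<forall>j<n. j \<noteq> i \<longrightarrow> x j = undefined) then G x else 0)
       = (\<Sum>s\<in>UNIV. G (restrict (\<lambda>j. if j = i then s else undefined) {0..<n}))"
proof -
  define \<Phi> where "\<Phi> = (\<lambda>s::'a. restrict (\<lambda>j. if j = i then s else undefined) {0..<n})"
  have set: "{x\<in>cube n. \<forall>j<n. j \<noteq> i \<longrightarrow> x j = undefined} = \<Phi> ` UNIV"
  proof
    show "{x\<in>cube n. \<forall>j<n. j \<noteq> i \<longrightarrow> x j = undefined} \<subseteq> \<Phi> ` UNIV"
    proof
      fix x :: "nat \<Rightarrow> 'a" assume x: "x \<in> {x\<in>cube n. \<forall>j<n. j \<noteq> i \<longrightarrow> x j = undefined}"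
      have "x = \<Phi> (x i)"
        using x by (auto simp: \<Phi>_def cube_def PiE_iff extensional_def fun_eq_iff)
      then show "x \<in> \<Phi> ` UNIV" by blast
    qed
    show "\<Phi> ` UNIV \<subseteq> {x\<in>cube n. \<forall>j<n. j \<noteq> i \<longrightarrow> x j = undefined}"
      by (auto simp: \<Phi>_def cube_def)
  qed
  have Phi_i: "\<Phi> s i = s" for s using i by (simp add: \<Phi>_def)
  have inj: "inj \<Phi>"
    by (rule injI) (metis Phi_i)
  have "(\<Sum>x\<in>cube n. if (\<forall>j<n. j \<noteq> i \<longrightarrow> x j = undefined) then G x else 0)
      = (\<Sum>x\<in>{x\<in>cube n. \<forall>j<n. j \<noteq> i \<longrightarrow> x j = undefined}. G x)"
    by (simp add: sum.inter_filter cube_finite)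
  also have "\<dots> = (\<Sum>s\<in>UNIV. G (\<Phi> s))" unfolding set by (rule sum.reindex[OF inj, unfolded o_def])
  finally show ?thesis by (simp add: \<Phi>_def)
qed

lemma cube_param_marg:
  fixes g :: "'a::finite \<Rightarrow> 'b::comm_monoid_add"
  assumes i: "i < n" and i': "i' < n"
  shows "(\<Sum>x\<in>cube n. if x i' = t then (if (\<forall>j<n. j \<noteq> i \<longrightarrow> x j = undefined) then g (x i) else 0) else 0)
       = (if i' = i then g t else if t = undefined then (\<Sum>s\<in>UNIV. g s) else 0)"
proof -
  have "(\<Sum>x\<in>cube n. if x i' = t then (if (\<forall>j<n. j \<noteq> i \<longrightarrow> x j = undefined) then g (x i) else 0) else 0)
     = (\<Sum>x\<in>cube n. if (\<forall>j<n. j \<noteq> i \<longrightarrow> x j = undefined) then (if x i' = t then g (x i) else 0) else 0)"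
    by (intro sum.cong) auto
  also have "\<dots> = (\<Sum>s\<in>UNIV. (if restrict (\<lambda>j. if j = i then s else undefined) {0..<n} i' = t
       then g (restrict (\<lambda>j. if j = i then s else (undefined::'a)) {0..<n} i) else 0))"
    by (rule cube_param_sum[OF i])
  also have "\<dots> = (\<Sum>s\<in>UNIV. (if (if i' = i then s else undefined) = t then g s else 0))"
    using i i' by (intro sum.cong refl) simp
  also have "\<dots> = (if i' = i then g t else if t = undefined then (\<Sum>s\<in>UNIV. g s) else 0)"
    by (cases "i' = i") auto
  finally show ?thesis .
qed

lemma cube_marg_total:
  fixes f :: "(nat \<Rightarrow> 'a::finite) \<Rightarrow> 'b::comm_monoid_add"
  shows "(\<Sum>t\<in>UNIV. \<Sum>x\<in>cube n. if x i = t then f x else 0) = (\<Sum>x\<in>cube n. f x)"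
  by (subst sum.swap) simp


lemma tendsto_N_over_N: "(\<lambda>N::nat. real N / real N) \<longlonglongrightarrow> 1"
proof (rule Lim_transform_eventually[OF tendsto_const])
  show "\<forall>\<^sub>F N in sequentially. 1 = real N / real N"
    using eventually_gt_at_top[of 0] by eventually_elim simp
qed

lemma coupling_round:
  fixes \<pi> :: "(nat \<Rightarrow> 'a::finite) \<Rightarrow> real" and k :: "nat \<Rightarrow> nat \<Rightarrow> 'a \<Rightarrow> nat"
  assumes pos: "\<And>x. x \<in> cube n \<Longrightarrow> \<pi> x > 0"
    and sum1: "(\<Sum>x\<in>cube n. \<pi> x) = 1"
    and ksum: "\<And>i N. i < n \<Longrightarrow> (\<Sum>t\<in>UNIV. k i N t) = N"
    and klim: "\<And>i t. i < n \<Longrightarrow> (\<lambda>N. real (k i N t) / real N) \<longlonglongrightarrow> (\<Sum>x\<in>cube n. if x i = t then \<pi> x else 0)"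
  shows "\<exists>m :: nat \<Rightarrow> (nat \<Rightarrow> 'a) \<Rightarrow> nat.
    (\<forall>\<^sub>F N in sequentially. (\<Sum>x\<in>cube n. m N x) = N \<and>
        (\<forall>i<n. \<forall>t. (\<Sum>x\<in>cube n. if x i = t then m N x else 0) = k i N t)) \<and>
    (\<forall>x\<in>cube n. (\<lambda>N. real (m N x) / real N) \<longlonglongrightarrow> \<pi> x)"
proof -
  define C where "C = (cube n :: (nat \<Rightarrow> 'a) set)"
  have finC: "finite C" by (simp add: C_def cube_finite)
  define x0 where "x0 = restrict (\<lambda>_. undefined::'a) {0..<n}"
  have x0C: "x0 \<in> C" by (simp add: x0_def C_def cube_def)
  define m0 where "m0 = (\<lambda>N x. \<lfloor>real N * \<pi> x\<rfloor>)"
  define r where "r = (\<lambda>N. int N - (\<Sum>x\<in>C. m0 N x))"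
  define base where "base = (\<lambda>N x. m0 N x + (if x = x0 then r N else 0))"
  define e where "e = (\<lambda>i N t. int (k i N t) - (\<Sum>x\<in>C. if x i = t then base N x else 0))"
  define cI where "cI = (\<lambda>i (x::nat \<Rightarrow> 'a). \<forall>j<n. j \<noteq> i \<longrightarrow> x j = undefined)"
  define mi where "mi = (\<lambda>N x. base N x + (\<Sum>i<n. if cI i x then e i N (x i) else 0))"
  have base_sum: "(\<Sum>x\<in>C. base N x) = int N" for N
    using finC x0C by (simp add: base_def sum.distrib r_def)
  have e_sum: "(\<Sum>t\<in>UNIV. e i N t) = 0" if "i < n" for i N
  proof -
    have "(\<Sum>t\<in>UNIV. e i N t) = int (\<Sum>t\<in>UNIV. k i N t) - (\<Sum>t\<in>UNIV. \<Sum>x\<in>C. if x i = t then base N x else 0)"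
      by (simp add: e_def sum_subtractf)
    also have "(\<Sum>t\<in>UNIV. \<Sum>x\<in>C. if x i = t then base N x else 0) = (\<Sum>x\<in>C. base N x)"
      unfolding C_def by (rule cube_marg_total)
    finally show ?thesis using ksum[OF that] base_sum by simp
  qed
  have marg: "(\<Sum>x\<in>C. if x i' = t then mi N x else 0) = int (k i' N t)" if i': "i' < n" for i' N t
  proof -
    have "(\<Sum>x\<in>C. if x i' = t then mi N x else 0)
        = (\<Sum>x\<in>C. if x i' = t then base N x else 0)
          + (\<Sum>i<n. \<Sum>x\<in>C. if x i' = t then (if cI i x then e i N (x i) else 0) else 0)"
    proof -
      have "(\<Sum>x\<in>C. if x i' = t then mi N x else 0)
        = (\<Sum>x\<in>C. (if x i' = t then base N x else 0)
          + (\<Sum>i<n. if x i' = t then (if cI i x then e i N (x i) else 0) else 0))"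
        by (intro sum.cong refl) (simp add: mi_def)
      then show ?thesis by (simp add: sum.distrib sum.swap[of _ "{..<n}"])
    qed
    also have "(\<Sum>i<n. \<Sum>x\<in>C. if x i' = t then (if cI i x then e i N (x i) else 0) else 0)
        = (\<Sum>i<n. if i' = i then e i N t else 0)"
    proof (intro sum.cong refl)
      fix i assume "i \<in> {..<n}"
      then have i: "i < n" by simp
      show "(\<Sum>x\<in>C. if x i' = t then (if cI i x then e i N (x i) else 0) else 0) = (if i' = i then e i N t else 0)"
        unfolding C_def cI_def cube_param_marg[OF i i'] using e_sum[OF i] by simp
    qed
    also have "\<dots> = e i' N t" using i' by simp
    finally show ?thesis by (simp add: e_def)
  qed
  have tot: "(\<Sum>x\<in>C. mi N x) = int N" for N
  proof -
    have "(\<Sum>x\<in>C. mi N x) = (\<Sum>x\<in>C. base N x) + (\<Sum>i<n. \<Sum>x\<in>C. if cI i x then e i N (x i) else 0)"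
      by (simp add: mi_def sum.distrib sum.swap[of _ "{..<n}"])
    also have "(\<Sum>i<n. \<Sum>x\<in>C. if cI i x then e i N (x i) else 0) = 0"
    proof (rule sum.neutral, rule ballI)
      fix i assume "i \<in> {..<n}"
      then have i: "i < n" by simp
      show "(\<Sum>x\<in>C. if cI i x then e i N (x i) else 0) = 0"
        unfolding C_def cI_def cube_param_sum[OF i] using e_sum[OF i] i by simp
    qed
    finally show ?thesis using base_sum by simp
  qed
  have lim_m0: "(\<lambda>N. real_of_int (m0 N x) / real N) \<longlonglongrightarrow> \<pi> x" for x
    unfolding m0_def by (rule floor_div_tendsto)
  have lim_r: "(\<lambda>N. real_of_int (r N) / real N) \<longlonglongrightarrow> 0"
  proof -
    have "(\<lambda>N. real N / real N - (\<Sum>x\<in>C. real_of_int (m0 N x) / real N)) \<longlonglongrightarrow> 1 - (\<Sum>x\<in>C. \<pi> x)"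
      by (intro tendsto_intros tendsto_N_over_N lim_m0)
    moreover have "real_of_int (r N) / real N = real N / real N - (\<Sum>x\<in>C. real_of_int (m0 N x) / real N)" for N
      by (simp add: r_def diff_divide_distrib sum_divide_distrib)
    ultimately show ?thesis using sum1 by (simp add: C_def)
  qed
  have lim_base: "(\<lambda>N. real_of_int (base N x) / real N) \<longlonglongrightarrow> \<pi> x" for x
  proof -
    have "(\<lambda>N. real_of_int (m0 N x) / real N + (if x = x0 then 1 else 0) * (real_of_int (r N) / real N))
        \<longlonglongrightarrow> \<pi> x + (if x = x0 then 1 else 0) * 0"
      by (intro tendsto_intros lim_m0 lim_r)
    moreover have "real_of_int (base N x) / real N = real_of_int (m0 N x) / real N + (if x = x0 then 1 else 0) * (real_of_int (r N) / real N)" for N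
      by (simp add: base_def add_divide_distrib)
    ultimately show ?thesis by simp
  qed
  have lim_e: "(\<lambda>N. real_of_int (e i N t) / real N) \<longlonglongrightarrow> 0" if i: "i < n" for i t
  proof -
    have "(\<lambda>N. real (k i N t) / real N - (\<Sum>x\<in>C. (if x i = t then 1 else 0) * (real_of_int (base N x) / real N)))
        \<longlonglongrightarrow> (\<Sum>x\<in>cube n. if x i = t then \<pi> x else 0) - (\<Sum>x\<in>C. (if x i = t then 1 else 0) * \<pi> x)"
      by (intro tendsto_intros klim[OF i] lim_base)
    moreover have "real_of_int (e i N t) / real N = real (k i N t) / real N - (\<Sum>x\<in>C. (if x i = t then 1 else 0) * (real_of_int (base N x) / real N))" for N
      by (auto simp: e_def diff_divide_distrib sum_divide_distrib of_int_sum intro!: sum.cong)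
    moreover have "(\<Sum>x\<in>C. (if x i = t then 1 else 0) * \<pi> x) = (\<Sum>x\<in>cube n. if x i = t then \<pi> x else 0)"
      by (auto simp: C_def intro!: sum.cong)
    ultimately show ?thesis by simp
  qed
  have lim_mi: "(\<lambda>N. real_of_int (mi N x) / real N) \<longlonglongrightarrow> \<pi> x" for x
  proof -
    have "(\<lambda>N. real_of_int (base N x) / real N + (\<Sum>i<n. (if cI i x then 1 else 0) * (real_of_int (e i N (x i)) / real N)))
        \<longlonglongrightarrow> \<pi> x + (\<Sum>i<n. (if cI i x then 1 else 0) * 0)"
      by (intro tendsto_intros lim_base lim_e) simp
    moreover have "real_of_int (mi N x) / real N = real_of_int (base N x) / real N + (\<Sum>i<n. (if cI i x then 1 else 0) * (real_of_int (e i N (x i)) / real N))" for N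
      by (auto simp: mi_def add_divide_distrib sum_divide_distrib of_int_sum intro!: sum.cong)
    ultimately show ?thesis by simp
  qed
  have evpos: "\<forall>\<^sub>F N in sequentially. \<forall>x\<in>C. mi N x > 0"
  proof (rule eventually_ball_finite[OF finC], rule ballI)
    fix x assume x: "x \<in> C"
    have "\<forall>\<^sub>F N in sequentially. 0 < real_of_int (mi N x) / real N"
      using order_tendstoD(1)[OF lim_mi pos[OF x[unfolded C_def]]] .
    then show "\<forall>\<^sub>F N in sequentially. mi N x > 0"
    proof eventually_elim
      case (elim N)
      show ?case
      proof (rule ccontr)
        assume "\<not> mi N x > 0"
        then have "real_of_int (mi N x) \<le> 0" by simp
        then have "real_of_int (mi N x) / real N \<le> 0" by (simp add: divide_nonpos_nonneg)
        then show False using elim by simp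
      qed
    qed
  qed
  define m where "m = (\<lambda>N x. nat (mi N x))"
  have "\<forall>\<^sub>F N in sequentially. (\<Sum>x\<in>cube n. m N x) = N \<and>
        (\<forall>i<n. \<forall>t. (\<Sum>x\<in>cube n. if x i = t then m N x else 0) = k i N t)"
    using evpos
  proof eventually_elim
    case (elim N)
    have "int (\<Sum>x\<in>C. m N x) = (\<Sum>x\<in>C. mi N x)"
      using elim by (auto simp: m_def of_nat_sum intro!: sum.cong)
    then have A: "(\<Sum>x\<in>C. m N x) = N" using tot[of N] by (metis of_nat_eq_iff)
    have B: "(\<Sum>x\<in>C. if x i = t then m N x else 0) = k i N t" if i: "i < n" for i t
    proof -
      have "int (\<Sum>x\<in>C. if x i = t then m N x else 0) = (\<Sum>x\<in>C. if x i = t then mi N x else 0)"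
        using elim by (auto simp: m_def of_nat_sum intro!: sum.cong)
      then show ?thesis using marg[OF i, where N=N and t=t] by (metis C_def of_nat_eq_iff)
    qed
    show ?case using A B by (simp add: C_def)
  qed
  moreover have "\<forall>x\<in>cube n. (\<lambda>N. real (m N x) / real N) \<longlonglongrightarrow> \<pi> x"
  proof
    fix x :: "nat \<Rightarrow> 'a" assume x: "x \<in> cube n"
    show "(\<lambda>N. real (m N x) / real N) \<longlonglongrightarrow> \<pi> x"
    proof (rule Lim_transform_eventually[OF lim_mi])
      show "\<forall>\<^sub>F N in sequentially. real_of_int (mi N x) / real N = real (m N x) / real N"
        using evpos by eventually_elim (use x in \<open>auto simp: m_def C_def\<close>)
    qed
  qed
  ultimately show ?thesis by blast
qed



definition Wf :: "nat \<Rightarrow> ((nat \<Rightarrow> 'a) \<Rightarrow> real) \<Rightarrow> (nat \<Rightarrow> nat \<Rightarrow> 'a list) \<Rightarrow> nat \<Rightarrow> real" where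
  "Wf n h \<xi> N = (\<Sum>ys\<in>PiE {0..<n} (\<lambda>i. permutations_of_multiset (mset (\<xi> i N))). exp (kappa_sum n N h ys))"

lemma Wf_pos: "Wf n h \<xi> N > 0"
  unfolding Wf_def
  by (rule sum_pos) (auto simp: finite_PiE PiE_eq_empty_iff)

lemma term_formula:
  assumes len: "\<And>i. i < n \<Longrightarrow> length (\<xi> i N) = N" and N: "N > 0"
  shows "mutual_pressure_term n h \<xi> N
       = (ln (Wf n h \<xi> N) - (\<Sum>i<n. ln (real (card (permutations_of_multiset (mset (\<xi> i N))))))) / real N"
proof -
  define A where "A = (\<lambda>i. permutations_of_multiset (mset (\<xi> i N)))"
  have cA: "real (card (A i)) > 0" for i by (simp add: A_def card_gt_0_iff)
  have "(\<Sum>\<sigma>\<in>perm_tuples n N. exp (kappa_sum n N h (\<lambda>i. perm_act (\<sigma> i) (\<xi> i N))))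
      = (\<Prod>i\<in>{0..<n}. fact N / real (card (A i))) * Wf n h \<xi> N"
    unfolding perm_tuples_def Wf_def A_def
  proof (rule sum_PiE_fibers)
    show "finite {0..<n}" by simp
    show "finite {\<sigma>. \<sigma> permutes {0..<N}}" by (rule finite_permutations) simp
    fix i assume i: "i \<in> {0..<n}"
    then have li: "length (\<xi> i N) = N" using len by simp
    show "(\<lambda>\<sigma>. perm_act \<sigma> (\<xi> i N)) ` {\<sigma>. \<sigma> permutes {0..<N}} = permutations_of_multiset (mset (\<xi> i N))"
      by (rule perm_act_image[OF li])
    fix y assume "y \<in> permutations_of_multiset (mset (\<xi> i N))"
    then show "real (card {s \<in> {\<sigma>. \<sigma> permutes {0..<N}}. perm_act s (\<xi> i N) = y}) = fact N / real (card (permutations_of_multiset (mset (\<xi> i N))))"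
      by (rule perm_act_fiber_real[OF li])
  next
    fix y y' :: "nat \<Rightarrow> 'a list" assume "\<And>i. i \<in> {0..<n} \<Longrightarrow> y i = y' i"
    then show "exp (kappa_sum n N h y) = exp (kappa_sum n N h y')"
    proof -
      have "restrict (\<lambda>i. y i ! j) {0..<n} = restrict (\<lambda>i. y' i ! j) {0..<n}" for j
        by (rule restrict_ext) (simp add: \<open>\<And>i. i \<in> {0..<n} \<Longrightarrow> y i = y' i\<close>)
      then show ?thesis unfolding kappa_sum_def by simp
    qed
  qed
  also have "(\<Prod>i\<in>{0..<n}. fact N / real (card (A i))) = (fact N) ^ n / (\<Prod>i\<in>{0..<n}. real (card (A i)))"
    by (simp add: prod_dividef)
  finally have S: "(\<Sum>\<sigma>\<in>perm_tuples n N. exp (kappa_sum n N h (\<lambda>i. perm_act (\<sigma> i) (\<xi> i N))))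
      = (fact N) ^ n / (\<Prod>i\<in>{0..<n}. real (card (A i))) * Wf n h \<xi> N" .
  have pp: "(\<Prod>i\<in>{0..<n}. real (card (A i))) > 0" by (rule prod_pos) (use cA in auto)
  have fpos: "(fact N :: real) ^ n > 0" by simp
  have E1: "1 / fact N ^ n * ((fact N) ^ n / (\<Prod>i\<in>{0..<n}. real (card (A i))) * Wf n h \<xi> N)
      = Wf n h \<xi> N / (\<Prod>i\<in>{0..<n}. real (card (A i)))"
    using fpos by (simp add: field_simps)
  have E2: "ln (Wf n h \<xi> N / (\<Prod>i\<in>{0..<n}. real (card (A i))))
      = ln (Wf n h \<xi> N) - (\<Sum>i<n. ln (real (card (A i))))"
    using pp Wf_pos[of n h \<xi> N] cA by (simp add: ln_div ln_prod atLeast0LessThan)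
  have "mutual_pressure_term n h \<xi> N = 1 / real N * ln (Wf n h \<xi> N / (\<Prod>i\<in>{0..<n}. real (card (A i))))"
    unfolding mutual_pressure_term_def S E1 ..
  also have "\<dots> = (ln (Wf n h \<xi> N) - (\<Sum>i<n. ln (real (card (A i))))) / real N"
    unfolding E2 by simp
  finally show ?thesis by (simp add: A_def)
qed

lemma lnA_bounds:
  fixes xs :: "'a::finite list"
  assumes len: "length xs = N" and N: "N > 0"
  shows "real N * entropy (seq_type xs) - real (card (UNIV::'a set)) * (ln (real N + 1) + 1)
           \<le> ln (real (card (permutations_of_multiset (mset xs))))"
    and "ln (real (card (permutations_of_multiset (mset xs))))
           \<le> real N * entropy (seq_type xs) + ln (real N + 1) + 1"
proof -
  define c where "c = count_list xs"
  have csum: "(\<Sum>t\<in>UNIV. c t) = N" using len by (simp add: c_def sum_count_set)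
  have ent: "entropy (seq_type xs) = Hent UNIV (\<lambda>t. real (c t) / real N)"
    by (simp add: entropy_Hent seq_type_def[abs_def] c_def len)
  have prod: "(\<Prod>t\<in>set_mset (mset xs). fact (count (mset xs) t)) = (\<Prod>t\<in>UNIV. fact (c t) :: nat)"
  proof -
    have "(\<Prod>t\<in>set_mset (mset xs). fact (count (mset xs) t)) = (\<Prod>t\<in>set_mset (mset xs). fact (c t))"
      by (simp add: c_def count_mset)
    also have "\<dots> = (\<Prod>t\<in>UNIV. fact (c t))"
    proof (rule prod.mono_neutral_left)
      show "\<forall>i\<in>UNIV - set_mset (mset xs). fact (c i) = 1"
      proof
        fix i assume "i \<in> UNIV - set_mset (mset xs)"
        then have "i \<notin> set xs" by simp
        then show "fact (c i) = 1" by (simp add: c_def)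
      qed
    qed simp_all
    finally show ?thesis .
  qed
  have "card (permutations_of_multiset (mset xs)) * (\<Prod>t\<in>UNIV. fact (c t)) = fact N"
    using card_permutations_of_multiset_aux[of "mset xs"] prod len by simp
  then have "real (card (permutations_of_multiset (mset xs)) * (\<Prod>t\<in>UNIV. fact (c t))) = real (fact N)"
    by (simp only:)
  then have e: "real (card (permutations_of_multiset (mset xs))) * (\<Prod>t\<in>UNIV. fact (c t)) = fact N"
    by (simp only: of_nat_mult of_nat_prod of_nat_fact)
  have cpos: "real (card (permutations_of_multiset (mset xs))) > 0" by (simp add: card_gt_0_iff)
  have ppos: "(\<Prod>t\<in>UNIV. fact (c t) :: real) > 0" by (rule prod_pos) simp
  have "ln (fact N :: real) = ln (real (card (permutations_of_multiset (mset xs)))) + ln (\<Prod>t\<in>UNIV. fact (c t) :: real)"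
    using ln_mult_pos[OF cpos ppos] e by simp
  moreover have "ln (\<Prod>t\<in>UNIV. fact (c t) :: real) = (\<Sum>t\<in>UNIV. ln (fact (c t)))"
    by (intro ln_prod) auto
  ultimately have L: "ln (real (card (permutations_of_multiset (mset xs)))) = ln (fact N) - (\<Sum>t\<in>UNIV. ln (fact (c t)))"
    by simp
  show "real N * entropy (seq_type xs) - real (card (UNIV::'a set)) * (ln (real N + 1) + 1)
           \<le> ln (real (card (permutations_of_multiset (mset xs))))"
    using multi_lower[of UNIV c N] csum N unfolding L ent by simp
  show "ln (real (card (permutations_of_multiset (mset xs))))
           \<le> real N * entropy (seq_type xs) + ln (real N + 1) + 1"
    using multi_upper[of UNIV c N] csum N unfolding L ent by simp
qed



lemma approx_len: "approx_seq n \<mu> \<xi> \<Longrightarrow> i < n \<Longrightarrow> length (\<xi> i N) = N"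
  by (simp add: approx_seq_def sorted_seqs_def)

lemma approx_lim: "approx_seq n \<mu> \<xi> \<Longrightarrow> i < n \<Longrightarrow> (\<lambda>N. seq_type (\<xi> i N) t) \<longlonglongrightarrow> \<mu> i t"
  by (simp add: approx_seq_def)

lemma seq_type_nonneg: "seq_type xs t \<ge> 0"
  by (simp add: seq_type_def)

lemma entropy_lim:
  assumes "approx_seq n \<mu> \<xi>" "i < n"
  shows "(\<lambda>N. entropy (seq_type (\<xi> i N))) \<longlonglongrightarrow> entropy (\<mu> i)"
  unfolding entropy_Hent
  by (rule Hent_tendsto) (simp_all add: approx_lim[OF assms] seq_type_nonneg)

lemma upper_bound:
  fixes h :: "(nat \<Rightarrow> 'a::{finite,linorder}) \<Rightarrow> real"
  assumes approx: "approx_seq n \<mu> \<xi>" and ie: "ia < n \<or> \<epsilon> = 0"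
  shows "mutual_pressure n h \<xi> \<le> ereal (pressure (cube n) (\<lambda>x. h x + \<epsilon> * (if x ia = ta then 1 else 0))
            - \<epsilon> * \<mu> ia ta - (\<Sum>i<n. entropy (\<mu> i)))"
proof -
  note len = approx_len[OF approx]
  define Pe where "Pe = pressure (cube n) (\<lambda>x. h x + \<epsilon> * (if x ia = ta then 1 else 0))"
  define d where "d = real (card (UNIV::'a set))"
  define ub where "ub = (\<lambda>N. Pe - \<epsilon> * seq_type (\<xi> ia N) ta - (\<Sum>i<n. entropy (seq_type (\<xi> i N)))
                           + real n * d * ((ln (real N + 1) + 1) / real N))"
  have ev: "\<forall>\<^sub>F N in sequentially. mutual_pressure_term n h \<xi> N \<le> ub N"
    using eventually_gt_at_top[of 0]
  proof eventually_elim
    case (elim N)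
    define LA where "LA = (\<lambda>i. ln (real (card (permutations_of_multiset (mset (\<xi> i N))))))"
    have Wle: "Wf n h \<xi> N \<le> exp (real N * Pe - \<epsilon> * real (count_list (\<xi> ia N) ta))"
      unfolding Wf_def Pe_def by (rule W_upper[OF len ie])
    have lnW: "ln (Wf n h \<xi> N) \<le> real N * Pe - \<epsilon> * real (count_list (\<xi> ia N) ta)"
    proof -
      have "ln (Wf n h \<xi> N) \<le> ln (exp (real N * Pe - \<epsilon> * real (count_list (\<xi> ia N) ta)))"
        using Wle Wf_pos[of n h \<xi> N] by (subst ln_le_cancel_iff) auto
      then show ?thesis by simp
    qed
    have LAs: "(\<Sum>i<n. real N * entropy (seq_type (\<xi> i N)) - d * (ln (real N + 1) + 1)) \<le> (\<Sum>i<n. LA i)"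
      by (rule sum_mono) (use lnA_bounds(1)[OF len elim] in \<open>simp add: LA_def d_def\<close>)
    have cnt: "\<epsilon> * real (count_list (\<xi> ia N) ta) = real N * (\<epsilon> * seq_type (\<xi> ia N) ta)"
      using ie elim len[of ia] by (auto simp: seq_type_def)
    have main: "ln (Wf n h \<xi> N) - (\<Sum>i<n. LA i) \<le> real N * ub N"
    proof -
      have "real N * ub N = real N * Pe - real N * (\<epsilon> * seq_type (\<xi> ia N) ta)
           - (\<Sum>i<n. real N * entropy (seq_type (\<xi> i N)) - d * (ln (real N + 1) + 1))"
        using elim by (simp add: ub_def algebra_simps sum_subtractf sum_distrib_left) (simp add: field_simps)
      then show ?thesis using lnW LAs cnt by linarith
    qed
    show ?case
      using main elim by (simp add: term_formula[of n \<xi> N, OF len elim] LA_def pos_divide_le_eq mult.commute)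
  qed
  have l1: "(\<lambda>N. \<epsilon> * seq_type (\<xi> ia N) ta) \<longlonglongrightarrow> \<epsilon> * \<mu> ia ta"
  proof (cases "\<epsilon> = 0")
    case False then show ?thesis using ie by (intro tendsto_intros approx_lim[OF approx]) auto
  qed simp
  have l2: "(\<lambda>N. \<Sum>i<n. entropy (seq_type (\<xi> i N))) \<longlonglongrightarrow> (\<Sum>i<n. entropy (\<mu> i))"
    by (intro tendsto_sum entropy_lim[OF approx]) simp
  have lim: "ub \<longlonglongrightarrow> Pe - \<epsilon> * \<mu> ia ta - (\<Sum>i<n. entropy (\<mu> i)) + real n * d * 0"
    unfolding ub_def by (intro tendsto_intros log_over_N l1 l2)
  have "mutual_pressure n h \<xi> \<le> limsup (\<lambda>N. ereal (ub N))"
    unfolding mutual_pressure_def by (rule Limsup_mono) (use ev in simp)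
  also have "limsup (\<lambda>N. ereal (ub N)) = ereal (Pe - \<epsilon> * \<mu> ia ta - (\<Sum>i<n. entropy (\<mu> i)))"
    by (rule lim_imp_Limsup) (use lim in \<open>simp_all add: tendsto_ereal\<close>)
  finally show ?thesis by (simp add: Pe_def)
qed


lemma Z_pos: "(\<Sum>x\<in>cube n. exp ((h::(nat \<Rightarrow> 'a::finite) \<Rightarrow> real) x)) > 0"
  by (rule sum_pos) (auto simp: cube_finite[unfolded cube_def] cube_def PiE_eq_empty_iff)

lemma gibbs_eq: "gibbs (cube n) h x = exp (h x) / (\<Sum>y\<in>cube n. exp ((h::(nat \<Rightarrow> 'a::finite) \<Rightarrow> real) y))"
  using Z_pos[where n=n and h=h] by (simp add: gibbs_def pressure_def exp_diff)

lemma gibbs_facts: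
  fixes h :: "(nat \<Rightarrow> 'a::finite) \<Rightarrow> real"
  shows "\<And>x. gibbs (cube n) h x > 0"
    and "(\<Sum>x\<in>cube n. gibbs (cube n) h x) = 1"
    and "Hent (cube n) (gibbs (cube n) h) + (\<Sum>x\<in>cube n. gibbs (cube n) h x * h x) = pressure (cube n) h"
proof -
  show "\<And>x. gibbs (cube n) h x > 0" by (simp add: gibbs_def)
  show s1: "(\<Sum>x\<in>cube n. gibbs (cube n) h x) = 1"
    using Z_pos[where n=n and h=h] by (simp add: gibbs_eq sum_divide_distrib[symmetric])
  have "Hent (cube n) (gibbs (cube n) h) = - (\<Sum>x\<in>cube n. gibbs (cube n) h x * (h x - pressure (cube n) h))"
    by (simp add: Hent_def gibbs_def)
  also have "\<dots> = - (\<Sum>x\<in>cube n. gibbs (cube n) h x * h x) + pressure (cube n) h * (\<Sum>x\<in>cube n. gibbs (cube n) h x)"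
    by (simp add: algebra_simps sum_subtractf sum_distrib_left)
  finally show "Hent (cube n) (gibbs (cube n) h) + (\<Sum>x\<in>cube n. gibbs (cube n) h x * h x) = pressure (cube n) h"
    using s1 by simp
qed

lemma lower_bound:
  fixes h :: "(nat \<Rightarrow> 'a::{finite,linorder}) \<Rightarrow> real"
  assumes approx: "approx_seq n \<mu> \<xi>"
    and ii: "\<forall>i<n. \<forall>t. \<mu> i t = gibbs_marginal n h i t"
  shows "ereal (pressure (cube n) h - (\<Sum>i<n. entropy (\<mu> i))) \<le> mutual_pressure n h \<xi>"
proof -
  note len = approx_len[OF approx]
  define \<pi> where "\<pi> = gibbs (cube n) h"
  define k where "k = (\<lambda>i N t. count_list (\<xi> i N) t)"
  define C where "C = (cube n :: (nat \<Rightarrow> 'a) set)"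
  have finC: "finite C" by (simp add: C_def cube_finite)
  have "\<exists>m :: nat \<Rightarrow> (nat \<Rightarrow> 'a) \<Rightarrow> nat.
    (\<forall>\<^sub>F N in sequentially. (\<Sum>x\<in>cube n. m N x) = N \<and>
        (\<forall>i<n. \<forall>t. (\<Sum>x\<in>cube n. if x i = t then m N x else 0) = k i N t)) \<and>
    (\<forall>x\<in>cube n. (\<lambda>N. real (m N x) / real N) \<longlonglongrightarrow> \<pi> x)"
  proof (rule coupling_round)
    show "\<And>x. x \<in> cube n \<Longrightarrow> \<pi> x > 0" using gibbs_facts(1) by (simp add: \<pi>_def)
    show "(\<Sum>x\<in>cube n. \<pi> x) = 1" using gibbs_facts(2) by (simp add: \<pi>_def)
    show "\<And>i N. i < n \<Longrightarrow> (\<Sum>t\<in>UNIV. k i N t) = N"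
      using len by (simp add: k_def sum_count_set)
    fix i t assume i: "i < n"
    have "(\<lambda>N. seq_type (\<xi> i N) t) \<longlonglongrightarrow> \<mu> i t" by (rule approx_lim[OF approx i])
    moreover have "seq_type (\<xi> i N) t = real (k i N t) / real N" for N
      using len[OF i] by (simp add: seq_type_def k_def)
    moreover have "\<mu> i t = (\<Sum>x\<in>cube n. if x i = t then \<pi> x else 0)"
      unfolding \<pi>_def using ii i by (simp add: gibbs_marginal_def sum.inter_filter cube_finite)
    ultimately show "(\<lambda>N. real (k i N t) / real N) \<longlonglongrightarrow> (\<Sum>x\<in>cube n. if x i = t then \<pi> x else 0)"
      by simp
  qed
  then obtain m :: "nat \<Rightarrow> (nat \<Rightarrow> 'a) \<Rightarrow> nat" where
    evm: "\<forall>\<^sub>F N in sequentially. (\<Sum>x\<in>cube n. m N x) = N \<and>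
        (\<forall>i<n. \<forall>t. (\<Sum>x\<in>cube n. if x i = t then m N x else 0) = k i N t)"
    and limm: "\<forall>x\<in>cube n. (\<lambda>N. real (m N x) / real N) \<longlonglongrightarrow> \<pi> x"
    by blast
  define D where "D = real (card C)"
  define lb where "lb = (\<lambda>N. Hent C (\<lambda>x. real (m N x) / real N) + (\<Sum>x\<in>C. real (m N x) / real N * h x)
      - (\<Sum>i<n. entropy (seq_type (\<xi> i N))) - (D + real n) * ((ln (real N + 1) + 1) / real N))"
  have ev: "\<forall>\<^sub>F N in sequentially. lb N \<le> mutual_pressure_term n h \<xi> N"
    using evm eventually_gt_at_top[of 0]
  proof eventually_elim
    case (elim N)
    define LA where "LA = (\<lambda>i. ln (real (card (permutations_of_multiset (mset (\<xi> i N))))))"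
    define L where "L = ln (real N + 1) + 1"
    have sumN: "(\<Sum>x\<in>cube n. m N x) = N" using elim by simp
    have marg: "(\<Sum>x\<in>{x\<in>cube n. x i = t}. m N x) = count_list (\<xi> i N) t" if "i < n" for i t
      using elim that by (simp add: sum.inter_filter cube_finite k_def)
    have Wl: "ln (fact N) - (\<Sum>x\<in>cube n. ln (fact (m N x))) + (\<Sum>x\<in>cube n. real (m N x) * h x) \<le> ln (Wf n h \<xi> N)"
      unfolding Wf_def by (rule W_lower[OF len sumN marg])
    have ml: "real N * Hent C (\<lambda>x. real (m N x) / real N) - real (card C) * L
         \<le> ln (fact N) - (\<Sum>x\<in>C. ln (fact (m N x)))"
      unfolding L_def by (rule multi_lower[OF finC]) (use sumN elim in \<open>simp_all add: C_def\<close>)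
    have LAs: "(\<Sum>i<n. LA i) \<le> (\<Sum>i<n. real N * entropy (seq_type (\<xi> i N)) + L)"
      by (rule sum_mono) (use lnA_bounds(2)[OF len elim(2)] in \<open>simp add: LA_def L_def add.assoc\<close>)
    have main: "real N * lb N \<le> ln (Wf n h \<xi> N) - (\<Sum>i<n. LA i)"
    proof -
      have "real N * lb N = real N * Hent C (\<lambda>x. real (m N x) / real N) + (\<Sum>x\<in>C. real (m N x) * h x)
          - (\<Sum>i<n. real N * entropy (seq_type (\<xi> i N)) + L) - D * L"
        using elim(2) by (simp add: lb_def L_def algebra_simps sum_distrib_left sum.distrib)
          (simp add: field_simps)
      then show ?thesis using Wl ml LAs by (simp add: C_def D_def)
    qed
    show ?case
      using main elim(2) by (simp add: term_formula[of n \<xi> N, OF len elim(2)] LA_def pos_le_divide_eq mult.commute)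
  qed
  have l1: "(\<lambda>N. Hent C (\<lambda>x. real (m N x) / real N)) \<longlonglongrightarrow> Hent C \<pi>"
    by (rule Hent_tendsto[OF finC]) (use limm in \<open>simp_all add: C_def\<close>)
  have l2: "(\<lambda>N. \<Sum>x\<in>C. real (m N x) / real N * h x) \<longlonglongrightarrow> (\<Sum>x\<in>C. \<pi> x * h x)"
    by (intro tendsto_intros) (use limm in \<open>simp add: C_def\<close>)
  have l3: "(\<lambda>N. \<Sum>i<n. entropy (seq_type (\<xi> i N))) \<longlonglongrightarrow> (\<Sum>i<n. entropy (\<mu> i))"
    by (intro tendsto_sum entropy_lim[OF approx]) simp
  have lim: "lb \<longlonglongrightarrow> Hent C \<pi> + (\<Sum>x\<in>C. \<pi> x * h x) - (\<Sum>i<n. entropy (\<mu> i)) - (D + real n) * 0"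
    unfolding lb_def by (intro tendsto_intros log_over_N l1 l2 l3)
  have "ereal (pressure (cube n) h - (\<Sum>i<n. entropy (\<mu> i))) = limsup (\<lambda>N. ereal (lb N))"
    using gibbs_facts(3)[where n=n and h=h] lim
    by (intro lim_imp_Limsup[symmetric]) (simp_all add: tendsto_ereal C_def \<pi>_def)
  also have "\<dots> \<le> mutual_pressure n h \<xi>"
    unfolding mutual_pressure_def by (rule Limsup_mono) (use ev in simp)
  finally show ?thesis .
qed


lemma strict_improve:
  fixes h :: "(nat \<Rightarrow> 'a::finite) \<Rightarrow> real"
  assumes ne: "\<mu>0 \<noteq> gibbs_marginal n h i0 t0"
  shows "\<exists>\<epsilon>. pressure (cube n) (\<lambda>x. h x + \<epsilon> * (if x i0 = t0 then 1 else 0)) - \<epsilon> * \<mu>0 < pressure (cube n) h"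
proof -
  define g where "g = (\<lambda>x::nat \<Rightarrow> 'a. if x i0 = t0 then 1 else (0::real))"
  define Z where "Z = (\<Sum>x\<in>cube n. exp (h x))"
  have Zp: "Z > 0" unfolding Z_def by (rule Z_pos)
  define f where "f = (\<lambda>e. ln (\<Sum>x\<in>cube n. exp (h x + e * g x)) - e * \<mu>0)"
  define l where "l = (\<Sum>x\<in>cube n. exp (h x) * g x) / Z - \<mu>0"
  have der: "(f has_real_derivative l) (at 0)"
    unfolding f_def l_def
    by (auto intro!: derivative_eq_intros simp: Z_def[symmetric] Zp)
  have f0: "f 0 = pressure (cube n) h" by (simp add: f_def pressure_def)
  have fe: "f e = pressure (cube n) (\<lambda>x. h x + e * (if x i0 = t0 then 1 else 0)) - e * \<mu>0" for e
    by (simp add: f_def pressure_def g_def)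
  have "(\<Sum>x\<in>cube n. exp (h x) * g x) / Z = gibbs_marginal n h i0 t0"
    by (auto simp: gibbs_marginal_def gibbs_eq Z_def[symmetric] g_def sum_divide_distrib sum.inter_filter cube_finite intro!: sum.cong)
  then have l0: "l \<noteq> 0" using ne by (simp add: l_def)
  show ?thesis
  proof (cases "l > 0")
    case True
    obtain d where d: "d > 0" "\<forall>h>0. h < d \<longrightarrow> f (0 - h) < f 0"
      using DERIV_pos_inc_left[OF der True] by blast
    then have "f (0 - d/2) < f 0" by simp
    then show ?thesis using f0 fe by metis
  next
    case False
    then have "l < 0" using l0 by simp
    obtain d where d: "d > 0" "\<forall>h>0. h < d \<longrightarrow> f 0 > f (0 + h)"
      using DERIV_neg_dec_right[OF der \<open>l < 0\<close>] by blast
    then have "f (0 + d/2) < f 0" by simp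
    then show ?thesis using f0 fe by metis
  qed
qed

lemma ii_iii:
  fixes h :: "(nat \<Rightarrow> 'a::finite) \<Rightarrow> real"
  assumes i: "i < n"
  shows "gibbs_marginal n h i t = gibbs UNIV (partial_log_sum n h i) t"
proof -
  define a where "a = (\<lambda>s. \<Sum>x\<in>{x\<in>cube n. x i = s}. exp (h x))"
  define Z where "Z = (\<Sum>x\<in>cube n. exp (h x))"
  have apos: "a s > 0" for s
  proof -
    have "restrict (\<lambda>j. if j = i then s else undefined) {0..<n} \<in> {x\<in>cube n. x i = s}"
      using i by (simp add: cube_def)
    then show ?thesis unfolding a_def
      by (intro sum_pos2[where i="restrict (\<lambda>j. if j = i then s else undefined) {0..<n}"])
         (auto simp: cube_finite)
  qed
  have Zp: "Z > 0" unfolding Z_def by (rule Z_pos)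
  have asum: "(\<Sum>s\<in>UNIV. a s) = Z"
    unfolding a_def Z_def by (simp add: sum.inter_filter cube_finite cube_marg_total)
  have "gibbs UNIV (partial_log_sum n h i) t = exp (ln (a t) - ln (\<Sum>s\<in>UNIV. exp (ln (a s))))"
    by (simp add: gibbs_def pressure_def partial_log_sum_def a_def)
  also have "\<dots> = a t / Z" using apos asum Zp by (simp add: exp_diff)
  also have "\<dots> = gibbs_marginal n h i t"
    by (simp add: gibbs_marginal_def gibbs_eq Z_def[symmetric] a_def sum_divide_distrib)
  finally show ?thesis by simp
qed


theorem theorem4p4:
  fixes n :: nat
    and h :: "(nat \<Rightarrow> 'a::{finite,linorder}) \<Rightarrow> real"
    and \<mu> :: "nat \<Rightarrow> 'a \<Rightarrow> real"
    and \<xi> :: "nat \<Rightarrow> nat \<Rightarrow> 'a list"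
  assumes prob: "\<forall>i<n. is_prob (\<mu> i)"
    and approx: "approx_seq n \<mu> \<xi>"
  shows "ereal (pressure (cube n) h) \<ge> mutual_pressure n h \<xi> + ereal (\<Sum>i<n. entropy (\<mu> i))
       \<and> ((ereal (pressure (cube n) h) = mutual_pressure n h \<xi> + ereal (\<Sum>i<n. entropy (\<mu> i)))
           \<longleftrightarrow> (\<forall>i<n. \<forall>t. \<mu> i t = gibbs_marginal n h i t))
       \<and> ((\<forall>i<n. \<forall>t. \<mu> i t = gibbs_marginal n h i t)
           \<longleftrightarrow> (\<forall>i<n. \<forall>t. \<mu> i t = gibbs UNIV (partial_log_sum n h i) t))"
proof -
  define P where "P = pressure (cube n) h"
  define S where "S = (\<Sum>i<n. entropy (\<mu> i))"
  define MP where "MP = mutual_pressure n h \<xi>"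
  have ub0: "MP \<le> ereal (P - S)"
    using upper_bound[OF approx, where ia=0 and \<epsilon>=0 and ta=undefined and h=h] by (simp add: MP_def P_def S_def)
  have part1: "MP + ereal S \<le> ereal P"
  proof (cases MP)
    case (real r)
    then show ?thesis using ub0 by simp
  next
    case PInf
    then show ?thesis using ub0 by simp
  next
    case MInf
    then show ?thesis by simp
  qed
  have eq_iff: "MP + ereal S = ereal P \<longleftrightarrow> MP = ereal (P - S)"
    by (cases MP) auto
  have iff1: "(ereal P = MP + ereal S) \<longleftrightarrow> (\<forall>i<n. \<forall>t. \<mu> i t = gibbs_marginal n h i t)"
  proof
    assume ii: "\<forall>i<n. \<forall>t. \<mu> i t = gibbs_marginal n h i t"
    have "ereal (P - S) \<le> MP" using lower_bound[OF approx ii] by (simp add: MP_def P_def S_def)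
    then have "MP = ereal (P - S)" using ub0 by simp
    then show "ereal P = MP + ereal S" using eq_iff by simp
  next
    assume eq: "ereal P = MP + ereal S"
    show "\<forall>i<n. \<forall>t. \<mu> i t = gibbs_marginal n h i t"
    proof (rule ccontr)
      assume "\<not> (\<forall>i<n. \<forall>t. \<mu> i t = gibbs_marginal n h i t)"
      then obtain i0 t0 where i0: "i0 < n" and ne: "\<mu> i0 t0 \<noteq> gibbs_marginal n h i0 t0" by blast
      obtain \<epsilon> where e: "pressure (cube n) (\<lambda>x. h x + \<epsilon> * (if x i0 = t0 then 1 else 0)) - \<epsilon> * \<mu> i0 t0 < P"
        using strict_improve[OF ne] unfolding P_def by blast
      have "MP \<le> ereal (pressure (cube n) (\<lambda>x. h x + \<epsilon> * (if x i0 = t0 then 1 else 0)) - \<epsilon> * \<mu> i0 t0 - S)"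
        using upper_bound[OF approx, where ia=i0 and \<epsilon>=\<epsilon> and ta=t0 and h=h] i0 by (simp add: MP_def S_def)
      also have "\<dots> < ereal (P - S)" using e by simp
      finally have "MP < ereal (P - S)" .
      moreover have "MP = ereal (P - S)" using eq eq_iff by simp
      ultimately show False by simp
    qed
  qed
  have iff2: "(\<forall>i<n. \<forall>t. \<mu> i t = gibbs_marginal n h i t)
           \<longleftrightarrow> (\<forall>i<n. \<forall>t. \<mu> i t = gibbs UNIV (partial_log_sum n h i) t)"
    using ii_iii by metis
  show ?thesis using part1 iff1 iff2 unfolding P_def S_def MP_def by simp
qed

end
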